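(* Let $f=a_0+a_1x+\cdots+a_nx^n\in\mathbb{Z}[x]$ be a primitive polynomial. Suppose that $a_0=\pm p^k d$ and $\gcd(a_0,a_1,a_2)=p^k$ for some positive integers $k$ and $d$ and a prime number $p$, where $p\nmid a_3 d$ and $\gcd(k,3)=1$, and that every zero $\theta\in\mathbb{C}$ of $f$ satisfies $|\theta|>d$. Then $f$ is irreducible in $\mathbb{Z}[x]$.
   Context: A polynomial $a_0+a_1x+\cdots+a_nx^n\in\mathbb{Z}[x]$ is primitive if $\gcd(a_0,a_1,\ldots,a_n)=1$. Coefficients $a_i$ with $i>n$ are taken to be $0$. *)

theory Defs
  imports "HOL-Computational_Algebra.Computational_Algebra"
begin

end

theory Submission
  imports Defs
begin

lemma pdvd_cancel:
  fixes p x :: int assumes "p \<noteq> 0"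
  shows "p^(e+1) dvd p^e * x \<longleftrightarrow> p dvd x"
proof -
  have "p^(e+1) = p^e * p" by simp
  thus ?thesis using assms by (simp only: dvd_mult_cancel_left) simp
qed

lemma core:
  fixes p u w b1 b2 c1 c2 :: int and i j :: nat
  assumes pr: "prime p" and ij: "i \<ge> 1" "j \<ge> 1"
    and u: "\<not> p dvd u" and w: "\<not> p dvd w" and b1: "\<not> p dvd b1"
    and a1: "p^(i+j) dvd p^i*u*c1 + b1*(p^j*w)"
    and a2: "p^(i+j) dvd p^i*u*c2 + b1*c1 + b2*(p^j*w)"
    and a3: "\<not> p dvd (b1*c2 + b2*c1)"
    and k3: "\<not> 3 dvd (i+j)"
  shows False
proof -
  have p0: "p \<noteq> 0" using pr by auto
  have nb1w: "\<not> p^(j+1) dvd b1*(p^j*w)"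
  proof
    assume "p^(j+1) dvd b1*(p^j*w)"
    hence "p^(j+1) dvd p^j*(b1*w)" by (simp add: ac_simps)
    hence "p dvd b1*w" using pdvd_cancel[OF p0] by blast
    thus False using pr b1 w by (simp add: prime_dvd_mult_iff)
  qed
  have "p^(j+1) dvd p^(i+j)" by (rule le_imp_power_dvd) (use ij in simp)
  hence nj: "\<not> p^(j+1) dvd p^i*u*c1" using a1 nb1w
    by (meson dvd_add_right_iff dvd_trans)
  have ilej: "i \<le> j"
  proof (rule ccontr)
    assume "\<not> i \<le> j"
    hence "p^(j+1) dvd p^i" by (intro le_imp_power_dvd) simp
    thus False using nj by (metis dvd_mult2 mult.assoc)
  qed
  define m where "m = j - i"
  have jm: "j = i + m" using ilej m_def by simp
  have "p^j dvd p^(i+j)" by (simp add: le_imp_power_dvd)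
  hence "p^j dvd p^i*u*c1 + b1*(p^j*w)" using a1 dvd_trans by blast
  hence "p^j dvd p^i*u*c1" by (simp add: dvd_add_left_iff)
  hence "p^i * p^m dvd p^i * (u*c1)" by (simp add: jm power_add ac_simps)
  hence "p^m dvd u*c1" using p0 by simp
  moreover have "coprime (p^m) u" using pr u
    by (simp add: prime_imp_coprime)
  ultimately have "p^m dvd c1" using coprime_dvd_mult_right_iff by blast
  then obtain t where t: "c1 = p^m * t" by blast
  have nt: "\<not> p dvd t"
  proof
    assume "p dvd t"
    then obtain s where "t = p*s" by blast
    hence "p^i*u*c1 = p^(j+1) * (u*s)" by (simp add: t jm power_add ac_simps)
    thus False using nj by (metis dvd_triv_left)
  qed
  have kk: "p^(i+j) dvd p^i*u*c2 + b1*c1 + b2*(p^j*w)" by (fact a2)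
  consider "m < i" | "m > i" | "m = i" by linarith
  thus False
  proof cases
    case 1
    have d1: "p^(m+1) dvd p^(i+j)" by (rule le_imp_power_dvd) (use 1 in simp)
    have d2: "p^(m+1) dvd p^i*u*c2" using 1
      by (metis Suc_eq_plus1 Suc_leI dvd_mult2 le_imp_power_dvd)
    have d3: "p^(m+1) dvd b2*(p^j*w)" using 1 jm
      by (metis dvd_mult dvd_mult2 le_add1 le_add2 le_imp_power_dvd le_trans Suc_eq_plus1 Suc_leI)
    have n: "\<not> p^(m+1) dvd b1*c1"
    proof
      assume "p^(m+1) dvd b1*c1"
      hence "p^(m+1) dvd p^m*(b1*t)" by (simp add: t ac_simps)
      hence "p dvd b1*t" using pdvd_cancel[OF p0] by blast
      thus False using pr b1 nt by (simp add: prime_dvd_mult_iff)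
    qed
    have "p^(m+1) dvd p^i*u*c2 + b1*c1 + b2*(p^j*w)" using d1 kk dvd_trans by blast
    thus False using d2 d3 n by (metis add.commute add.left_commute dvd_add_right_iff)
  next
    case 2
    have pc1: "p dvd c1" using 2 t by (metis dvd_mult2 dvd_power gr_implies_not0 ij(1) le0 not_less0 neq0_conv dvd_refl less_le_trans)
    have "\<not> p dvd c2"
    proof
      assume "p dvd c2"
      hence "p dvd b1*c2 + b2*c1" using pc1 by simp
      thus False using a3 by blast
    qed
    have d1: "p^(i+1) dvd p^(i+j)" by (rule le_imp_power_dvd) (use ij in simp)
    have n: "\<not> p^(i+1) dvd p^i*u*c2"
    proof
      assume "p^(i+1) dvd p^i*u*c2"
      hence "p^(i+1) dvd p^i*(u*c2)" by (simp add: ac_simps)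
      hence "p dvd u*c2" using pdvd_cancel[OF p0] by blast
      thus False using pr u \<open>\<not> p dvd c2\<close> by (simp add: prime_dvd_mult_iff)
    qed
    have d2: "p^(i+1) dvd b1*c1" using 2 t
      by (metis Suc_eq_plus1 Suc_leI dvd_mult dvd_mult2 le_imp_power_dvd)
    have d3: "p^(i+1) dvd b2*(p^j*w)" using 2 jm
      by (metis Suc_eq_plus1 Suc_leI dvd_mult dvd_mult2 le_imp_power_dvd add_strict_left_mono add_0_right less_le_trans not_less0 neq0_conv ij(1))
    have "p^(i+1) dvd p^i*u*c2 + b1*c1 + b2*(p^j*w)" using d1 kk dvd_trans by blast
    thus False using d2 d3 n by (metis add.assoc dvd_add_left_iff)
  next
    case 3
    hence "i + j = 3*i" using jm by simp
    thus False using k3 by simp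
  qed
qed

lemma root_bound:
  fixes q :: "complex poly" and D :: real
  assumes "degree q = n" "n \<ge> 1" "D \<ge> 1" "\<forall>z. poly q z = 0 \<longrightarrow> cmod z > D"
  shows "cmod (poly q 0) > D * cmod (lead_coeff q)"
  using assms
proof (induction n arbitrary: q)
  case 0 thus ?case by simp
next
  case (Suc n)
  have "\<not> constant (poly q)" using Suc.prems by (simp add: constant_degree)
  then obtain r where r: "poly q r = 0" using fundamental_theorem_of_algebra by blast
  hence "[:-r,1:] dvd q" by (simp add: poly_eq_0_iff_dvd)
  then obtain q' where q: "q = [:-r,1:] * q'" by blast
  have q0: "q \<noteq> 0" using Suc.prems by auto
  hence q'0: "q' \<noteq> 0" using q by auto
  have "degree ([:-r,1:] * q') = degree [:-r,1:] + degree q'" using q'0 by (intro degree_mult_eq) auto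
  hence "degree q = 1 + degree q'" using q by simp
  hence dq': "degree q' = n" using Suc.prems(1) by simp
  have "lead_coeff ([:-r,1:] * q') = lead_coeff [:-r,1:] * lead_coeff q'" by (rule lead_coeff_mult)
  hence lc: "lead_coeff q = lead_coeff q'" using q by simp
  have p0: "poly q 0 = - r * poly q' 0" using q by simp
  have rD: "cmod r > D" using r Suc.prems(4) by blast
  show ?case
  proof (cases "n = 0")
    case True
    hence "poly q' 0 = lead_coeff q'" using dq' by (simp add: poly_0_coeff_0)
    moreover have "lead_coeff q' \<noteq> 0" using q'0 by simp
    ultimately show ?thesis using p0 lc rD by (simp add: norm_mult)
  next
    case False
    have "\<forall>z. poly q' z = 0 \<longrightarrow> cmod z > D" using Suc.prems(4) q by auto
    hence ih: "cmod (poly q' 0) > D * cmod (lead_coeff q')" using Suc.IH[OF dq'] False Suc.prems(3) by auto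
    have "cmod (poly q 0) = cmod r * cmod (poly q' 0)" using p0 by (simp add: norm_mult)
    also have "\<dots> \<ge> 1 * cmod (poly q' 0)" using rD Suc.prems(3) by (intro mult_right_mono) auto
    finally show ?thesis using ih lc by simp
  qed
qed

lemma mp_mult: "map_poly (of_int :: int \<Rightarrow> complex) (g*h) = map_poly of_int g * map_poly of_int h"
  by (simp add: poly_eq_iff coeff_map_poly coeff_mult)

lemma small_const:
  fixes f g h :: "int poly" and d :: nat
  assumes fgh: "f = g*h" and dg: "degree g \<ge> 1" and d: "d > 0"
    and b0: "\<bar>coeff g 0\<bar> \<le> int d"
    and roots: "\<forall>\<theta>::complex. poly (map_poly of_int f) \<theta> = 0 \<longrightarrow> cmod \<theta> > real d"
  shows False
proof -
  define G where "G = map_poly (of_int :: int \<Rightarrow> complex) g"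
  have degG: "degree G = degree g" by (simp add: G_def degree_map_poly)
  have rG: "\<forall>z. poly G z = 0 \<longrightarrow> cmod z > real d"
    using roots by (simp add: fgh mp_mult G_def)
  have "cmod (poly G 0) > real d * cmod (lead_coeff G)"
    using root_bound[OF degG dg _ rG] d by simp
  moreover have "poly G 0 = of_int (coeff g 0)" by (simp add: G_def poly_0_coeff_0 coeff_map_poly)
  moreover have "lead_coeff G = of_int (lead_coeff g)" by (simp add: G_def degree_map_poly coeff_map_poly)
  moreover have "g \<noteq> 0" using dg by auto
  hence "\<bar>lead_coeff g\<bar> \<ge> 1" by (simp add: int_one_le_iff_zero_less)
  ultimately have "real_of_int \<bar>coeff g 0\<bar> > real d * real_of_int \<bar>lead_coeff g\<bar>" by simp
  moreover have "real d * real_of_int \<bar>lead_coeff g\<bar> \<ge> real d * 1"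
    using \<open>\<bar>lead_coeff g\<bar> \<ge> 1\<close> by (intro mult_left_mono) auto
  ultimately show False using b0 by linarith
qed

lemma const_unit:
  fixes g h :: "int poly"
  assumes "content (g*h) = 1" "degree g = 0"
  shows "is_unit g"
proof -
  obtain c where c: "g = [:c:]" using assms(2) degree_eq_zeroE by blast
  have "normalize c * content h = 1" using assms(1) by (simp add: content_mult c)
  hence "normalize c dvd 1" by (metis dvd_triv_left)
  hence "c dvd 1" by simp
  thus ?thesis using c by (simp add: is_unit_const_poly_iff)
qed

theorem theorem24:
  fixes f :: "int poly" and p k d :: nat
  assumes "content f = 1"
    and "prime p" and "k > 0" and "d > 0"
    and "coeff f 0 = int p ^ k * int d \<or> coeff f 0 = - (int p ^ k * int d)"
    and "gcd (coeff f 0) (gcd (coeff f 1) (coeff f 2)) = int p ^ k"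
    and "\<not> int p dvd coeff f 3 * int d"
    and "gcd k 3 = 1"
    and "\<forall>\<theta>::complex. poly (map_poly of_int f) \<theta> = 0 \<longrightarrow> cmod \<theta> > real d"
  shows "irreducible f"
proof -
  define P where "P = int p"
  have pr: "prime P" using assms(2) by (simp add: P_def)
  have P0: "P \<noteq> 0" using pr by auto
  have nd: "\<not> P dvd int d" and na3: "\<not> P dvd coeff f 3"
    using assms(7) by (auto simp: P_def)
  obtain e where e: "coeff f 0 = P^k * e" "\<bar>e\<bar> = int d"
    using assms(5) by (metis P_def abs_minus_cancel abs_of_nat mult_minus_right)
  have ne: "\<not> P dvd e" using nd e(2) by (metis dvd_abs_iff)
  have "P^k dvd gcd (coeff f 1) (coeff f 2)" using assms(6) by (metis P_def gcd_dvd2)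
  hence pk1: "P^k dvd coeff f 1" and pk2: "P^k dvd coeff f 2"
    by (auto intro: dvd_trans)
  have k3: "\<not> 3 dvd k"
  proof
    assume "3 dvd k"
    hence "3 dvd gcd k 3" by simp
    thus False using assms(8) by simp
  qed
  have a00: "coeff f 0 \<noteq> 0" using e P0 assms(4) by auto
  hence f0: "f \<noteq> 0" by auto
  have "coeff f 3 \<noteq> 0" using na3 by auto
  hence df: "degree f \<ge> 3" by (rule le_degree)
  show ?thesis
  proof (rule irreducibleI)
    show "f \<noteq> 0" by (fact f0)
    show "\<not> is_unit f" using df by (auto simp: is_unit_poly_iff)
  next
    fix g h assume fgh: "f = g * h"
    show "is_unit g \<or> is_unit h"
    proof (rule ccontr)
      assume nu: "\<not> (is_unit g \<or> is_unit h)"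
      have dg: "degree g \<ge> 1"
        using const_unit[of g h] nu assms(1) fgh by (metis One_nat_def Suc_leI neq0_conv)
      have dh: "degree h \<ge> 1"
        using const_unit[of h g] nu assms(1) fgh by (metis One_nat_def Suc_leI neq0_conv mult.commute)
      define b0 b1 b2 b3 c0 c1 c2 c3 where "b0 = coeff g 0" "b1 = coeff g 1" "b2 = coeff g 2" "b3 = coeff g 3"
        "c0 = coeff h 0" "c1 = coeff h 1" "c2 = coeff h 2" "c3 = coeff h 3"
      have f0e: "coeff f 0 = b0*c0" by (simp add: fgh b0_b1_b2_b3_c0_c1_c2_c3_def coeff_mult)
      have f1e: "coeff f 1 = b0*c1 + b1*c0" by (simp add: fgh b0_b1_b2_b3_c0_c1_c2_c3_def coeff_mult)
      have f2e: "coeff f 2 = b0*c2 + b1*c1 + b2*c0"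
        by (simp add: fgh b0_b1_b2_b3_c0_c1_c2_c3_def coeff_mult numeral_2_eq_2)
      have f3e: "coeff f 3 = b0*c3 + b1*c2 + b2*c1 + b3*c0"
        by (simp add: fgh b0_b1_b2_b3_c0_c1_c2_c3_def coeff_mult numeral_2_eq_2 numeral_3_eq_3)
      have b00: "b0 \<noteq> 0" and c00: "c0 \<noteq> 0" using a00 f0e by auto
      obtain i u where u: "b0 = P ^ i * u" "\<not> P dvd u" using b00 pr by (metis multiplicity_decompose' not_prime_unit)
      obtain j w where w: "c0 = P ^ j * w" "\<not> P dvd w" using c00 pr by (metis multiplicity_decompose' not_prime_unit)
      have uw: "\<not> P dvd u*w" using u(2) w(2) pr by (simp add: prime_dvd_mult_iff)
      have "coeff f 0 = (P^i*u)*(P^j*w)" using f0e u(1) w(1) by simp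
      hence prod: "coeff f 0 = P^(i+j) * (u*w)" by (simp add: power_add ac_simps)
      have "multiplicity P (coeff f 0) = i+j" by (rule multiplicity_decomposeI[OF prod uw P0])
      moreover have "multiplicity P (coeff f 0) = k" by (rule multiplicity_decomposeI[OF e(1) ne P0])
      ultimately have ijk: "i + j = k" by simp
      hence "u*w = e" using prod e(1) P0 by simp
      hence absuw: "\<bar>u\<bar> * \<bar>w\<bar> = int d" using e(2) by (metis abs_mult)
      have u0: "u \<noteq> 0" and w0: "w \<noteq> 0" using u(2) w(2) by auto
      have bu: "\<bar>u\<bar> \<le> int d" using absuw w0
        by (metis abs_ge_zero mult_le_cancel_left1 not_le zero_less_abs_iff int_one_le_iff_zero_less)
      have bw: "\<bar>w\<bar> \<le> int d" using absuw u0
        by (metis abs_ge_zero mult_le_cancel_right1 not_le zero_less_abs_iff int_one_le_iff_zero_less)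
      show False
      proof (cases "i = 0")
        case True
        hence "b0 = u" using u(1) by simp
        thus False using small_const[OF fgh dg assms(4) _ assms(9)] bu
          by (simp add: b0_b1_b2_b3_c0_c1_c2_c3_def)
      next
        case i1: False
        show False
        proof (cases "j = 0")
          case True
          hence "c0 = w" using w(1) by simp
          have hg: "f = h * g" using fgh by simp
          have "\<bar>coeff h 0\<bar> \<le> int d" using bw \<open>c0 = w\<close> by (simp add: b0_b1_b2_b3_c0_c1_c2_c3_def)
          thus False using small_const[OF hg dh assms(4) _ assms(9)] by blast
        next
          case j1: False
          have pb0: "P dvd b0" using u(1) i1 by (simp add: dvd_power)
          have pc0: "P dvd c0" using w(1) j1 by (simp add: dvd_power)
          have a3: "\<not> P dvd (b1*c2 + b2*c1)"
          proof
            assume "P dvd (b1*c2 + b2*c1)"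
            hence "P dvd b0*c3 + (b1*c2 + b2*c1) + b3*c0" using pb0 pc0 by simp
            thus False using na3 f3e by (simp add: ac_simps)
          qed
          have A1: "P^(i+j) dvd P^i*u*c1 + b1*(P^j*w)"
            using pk1 f1e u(1) w(1) ijk by simp
          have A2: "P^(i+j) dvd P^i*u*c2 + b1*c1 + b2*(P^j*w)"
            using pk2 f2e u(1) w(1) ijk by simp
          have k3': "\<not> 3 dvd (i+j)" using k3 ijk by simp
          have i1': "i \<ge> 1" and j1': "j \<ge> 1" using i1 j1 by auto
          show False
          proof (cases "P dvd b1")
            case False
            show False by (rule core[OF pr i1' j1' u(2) w(2) False A1 A2 a3 k3'])
          next
            case True
            have nc1: "\<not> P dvd c1"
            proof
              assume "P dvd c1"
              hence "P dvd b1*c2 + b2*c1" using True by simp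
              thus False using a3 by blast
            qed
            have B1: "P^(j+i) dvd P^j*w*b1 + c1*(P^i*u)"
              using A1 by (simp add: ac_simps)
            have B2: "P^(j+i) dvd P^j*w*b2 + c1*b1 + c2*(P^i*u)"
              using A2 by (simp add: ac_simps)
            have B3: "\<not> P dvd (c1*b2 + c2*b1)" using a3 by (simp add: ac_simps)
            have k3'': "\<not> 3 dvd (j+i)" using k3' by (simp add: ac_simps)
            show False by (rule core[OF pr j1' i1' w(2) u(2) nc1 B1 B2 B3 k3''])
          qed
        qed
      qed
    qed
  qed
qed

end
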